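(* Let $(\mathbb S,+,\cdot)$ be an S-Ring. Then $\Lambda=\mathbb S_0$, and consequently $(\mathbb S,+,\cdot)$ is Complete Regular.
   Context: An S-Structure is a triple $(\mathbb S,+,\cdot)$ where $\mathbb S$ is a set and $+,\cdot$ are binary operations on $\mathbb S$ such that: $(\mathbb S,+)$ is a commutative group with identity $0$ (the inverse of $s$ is written $-s$, and $s-t:=s+(-t)$); $\mathbb S$ is closed under $\cdot$; and there exists $s\in\mathbb S$ with $0\cdot s\neq 0$ or $s\cdot 0\neq 0$. Multiplication binds tighter than addition. The structures considered come with a distinguished element of $\mathbb S$ denoted $1$. It is Commutative if $s\cdot t=t\cdot s$ for all $s,t$. For a Commutative S-Structure and $\alpha\in\mathbb S$, put $\mathbb S_\alpha=\{s\in\mathbb S:0\cdot s=s\cdot 0=\alpha\}$ and $\Lambda=\{\alpha\in\mathbb S:\mathbb S_\alpha\neq\emptyset\}$. Wheel Distributive: $s\cdot(t+r)+(s\cdot 0)=(s\cdot t)+(s\cdot r)$ for all $s,t,r\in\mathbb S$. S-Associative: for all $m,n\in\mathbb S_0$ and $s\in\mathbb S$, $m\cdot(n\cdot s)=(m\cdot n)\cdot s-([(m-1)\cdot(n-1)]\cdot(0\cdot s))$. Base: if $\mathbb S_0\neq\emptyset$ and $\alpha\in\Lambda$, $q\in\mathbb S_\alpha$ is a Base for $\mathbb S_\alpha$ if $q+\beta\in\mathbb S_\alpha$ for all $\beta\in\mathbb S_0$ and every $s\in\mathbb S_\alpha$ equals $q+\beta$ for some $\beta\in\mathbb S_0$.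 Coordinated: $\mathbb S_0\neq\emptyset$ and every $\mathbb S_\alpha$ with $\alpha\in\Lambda$ has a Base. Standard Bases: a Coordinated Commutative S-Structure has Standard Bases if there is a specified element $q_0(1)\in\mathbb S_1$ which is a Base for $\mathbb S_1$, and for every $\alpha\in\Lambda$ the element $q_0(\alpha):=\alpha\cdot(q_0(1)+1)-1$ lies in $\mathbb S_\alpha$ and is a Base for $\mathbb S_\alpha$. An Essential S-Structure is an S-Structure that is Commutative, Wheel Distributive, S-Associative, has Standard Bases (in particular is Coordinated), satisfies $0,1\in\mathbb S_0$, and satisfies $\mathbb S_0=\{1\cdot x:x\in\mathbb S_0\}$. A Unity is an element $e\in\Lambda$ with $e\cdot s=s\cdot e=s$ for all $s\in\mathbb S$. An S-Ring is an Essential S-Structure which has a Unity. A Commutative S-Structure is Regular if $0\cdot s\in\mathbb S_0$ for every $s\in\mathbb S$, and Complete Regular if it is Regular and for every $\alpha\in\mathbb S_0$ there exists $s\in\mathbb S$ with $0\cdot s=\alpha$. *)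

theory Defs
  imports Main
begin

definition sneg :: "'a set \<Rightarrow> ('a \<Rightarrow> 'a \<Rightarrow> 'a) \<Rightarrow> 'a \<Rightarrow> 'a \<Rightarrow> 'a" where
  "sneg S add zero s = (THE t. t \<in> S \<and> add s t = zero)"

definition ssub :: "'a set \<Rightarrow> ('a \<Rightarrow> 'a \<Rightarrow> 'a) \<Rightarrow> 'a \<Rightarrow> 'a \<Rightarrow> 'a \<Rightarrow> 'a" where
  "ssub S add zero s t = add s (sneg S add zero t)"

definition s_structure ::
  "'a set \<Rightarrow> ('a \<Rightarrow> 'a \<Rightarrow> 'a) \<Rightarrow> ('a \<Rightarrow> 'a \<Rightarrow> 'a) \<Rightarrow> 'a \<Rightarrow> 'a \<Rightarrow> bool" where
  "s_structure S add mul zero one \<longleftrightarrow>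
     (\<forall>s\<in>S. \<forall>t\<in>S. add s t \<in> S) \<and>
     (\<forall>s\<in>S. \<forall>t\<in>S. \<forall>r\<in>S. add (add s t) r = add s (add t r)) \<and>
     (\<forall>s\<in>S. \<forall>t\<in>S. add s t = add t s) \<and>
     zero \<in> S \<and> (\<forall>s\<in>S. add zero s = s \<and> add s zero = s) \<and>
     (\<forall>s\<in>S. \<exists>t\<in>S. add s t = zero) \<and>
     (\<forall>s\<in>S. \<forall>t\<in>S. mul s t \<in> S) \<and>
     (\<exists>s\<in>S. mul zero s \<noteq> zero \<or> mul s zero \<noteq> zero) \<and>
     one \<in> S"

definition s_commutative :: "'a set \<Rightarrow> ('a \<Rightarrow> 'a \<Rightarrow> 'a) \<Rightarrow> bool" where
  "s_commutative S mul \<longleftrightarrow> (\<forall>s\<in>S. \<forall>t\<in>S. mul s t = mul t s)"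

definition S_sub :: "'a set \<Rightarrow> ('a \<Rightarrow> 'a \<Rightarrow> 'a) \<Rightarrow> 'a \<Rightarrow> 'a \<Rightarrow> 'a set" where
  "S_sub S mul zero \<alpha> = {s \<in> S. mul zero s = \<alpha> \<and> mul s zero = \<alpha>}"

definition Lambda :: "'a set \<Rightarrow> ('a \<Rightarrow> 'a \<Rightarrow> 'a) \<Rightarrow> 'a \<Rightarrow> 'a set" where
  "Lambda S mul zero = {\<alpha> \<in> S. S_sub S mul zero \<alpha> \<noteq> {}}"

definition wheel_distributive ::
  "'a set \<Rightarrow> ('a \<Rightarrow> 'a \<Rightarrow> 'a) \<Rightarrow> ('a \<Rightarrow> 'a \<Rightarrow> 'a) \<Rightarrow> 'a \<Rightarrow> bool" where
  "wheel_distributive S add mul zero \<longleftrightarrow>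
     (\<forall>s\<in>S. \<forall>t\<in>S. \<forall>r\<in>S. add (mul s (add t r)) (mul s zero) = add (mul s t) (mul s r))"

definition s_associative ::
  "'a set \<Rightarrow> ('a \<Rightarrow> 'a \<Rightarrow> 'a) \<Rightarrow> ('a \<Rightarrow> 'a \<Rightarrow> 'a) \<Rightarrow> 'a \<Rightarrow> 'a \<Rightarrow> bool" where
  "s_associative S add mul zero one \<longleftrightarrow>
     (\<forall>m\<in>S_sub S mul zero zero. \<forall>n\<in>S_sub S mul zero zero. \<forall>s\<in>S.
        mul m (mul n s) =
        ssub S add zero (mul (mul m n) s)
          (mul (mul (ssub S add zero m one) (ssub S add zero n one)) (mul zero s)))"

definition is_base ::
  "'a set \<Rightarrow> ('a \<Rightarrow> 'a \<Rightarrow> 'a) \<Rightarrow> ('a \<Rightarrow> 'a \<Rightarrow> 'a) \<Rightarrow> 'a \<Rightarrow> 'a \<Rightarrow> 'a \<Rightarrow> bool" where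
  "is_base S add mul zero \<alpha> q \<longleftrightarrow>
     q \<in> S_sub S mul zero \<alpha> \<and>
     (\<forall>\<beta>\<in>S_sub S mul zero zero. add q \<beta> \<in> S_sub S mul zero \<alpha>) \<and>
     (\<forall>s\<in>S_sub S mul zero \<alpha>. \<exists>\<beta>\<in>S_sub S mul zero zero. s = add q \<beta>)"

definition coordinated ::
  "'a set \<Rightarrow> ('a \<Rightarrow> 'a \<Rightarrow> 'a) \<Rightarrow> ('a \<Rightarrow> 'a \<Rightarrow> 'a) \<Rightarrow> 'a \<Rightarrow> bool" where
  "coordinated S add mul zero \<longleftrightarrow>
     S_sub S mul zero zero \<noteq> {} \<and>
     (\<forall>\<alpha>\<in>Lambda S mul zero. \<exists>q. is_base S add mul zero \<alpha> q)"

definition standard_bases ::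
  "'a set \<Rightarrow> ('a \<Rightarrow> 'a \<Rightarrow> 'a) \<Rightarrow> ('a \<Rightarrow> 'a \<Rightarrow> 'a) \<Rightarrow> 'a \<Rightarrow> 'a \<Rightarrow> bool" where
  "standard_bases S add mul zero one \<longleftrightarrow>
     coordinated S add mul zero \<and> s_commutative S mul \<and>
     (\<exists>q1. is_base S add mul zero one q1 \<and>
        (\<forall>\<alpha>\<in>Lambda S mul zero.
           is_base S add mul zero \<alpha> (ssub S add zero (mul \<alpha> (add q1 one)) one)))"

definition essential ::
  "'a set \<Rightarrow> ('a \<Rightarrow> 'a \<Rightarrow> 'a) \<Rightarrow> ('a \<Rightarrow> 'a \<Rightarrow> 'a) \<Rightarrow> 'a \<Rightarrow> 'a \<Rightarrow> bool" where
  "essential S add mul zero one \<longleftrightarrow>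
     s_structure S add mul zero one \<and>
     s_commutative S mul \<and>
     wheel_distributive S add mul zero \<and>
     s_associative S add mul zero one \<and>
     standard_bases S add mul zero one \<and>
     zero \<in> S_sub S mul zero zero \<and> one \<in> S_sub S mul zero zero \<and>
     S_sub S mul zero zero = {mul one x | x. x \<in> S_sub S mul zero zero}"

definition is_unity :: "'a set \<Rightarrow> ('a \<Rightarrow> 'a \<Rightarrow> 'a) \<Rightarrow> 'a \<Rightarrow> 'a \<Rightarrow> bool" where
  "is_unity S mul zero e \<longleftrightarrow>
     e \<in> Lambda S mul zero \<and> (\<forall>s\<in>S. mul e s = s \<and> mul s e = s)"

definition s_ring ::
  "'a set \<Rightarrow> ('a \<Rightarrow> 'a \<Rightarrow> 'a) \<Rightarrow> ('a \<Rightarrow> 'a \<Rightarrow> 'a) \<Rightarrow> 'a \<Rightarrow> 'a \<Rightarrow> bool" where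
  "s_ring S add mul zero one \<longleftrightarrow>
     essential S add mul zero one \<and> (\<exists>e. is_unity S mul zero e)"

definition regular :: "'a set \<Rightarrow> ('a \<Rightarrow> 'a \<Rightarrow> 'a) \<Rightarrow> 'a \<Rightarrow> bool" where
  "regular S mul zero \<longleftrightarrow>
     s_commutative S mul \<and> (\<forall>s\<in>S. mul zero s \<in> S_sub S mul zero zero)"

definition complete_regular :: "'a set \<Rightarrow> ('a \<Rightarrow> 'a \<Rightarrow> 'a) \<Rightarrow> 'a \<Rightarrow> bool" where
  "complete_regular S mul zero \<longleftrightarrow>
     regular S mul zero \<and>
     (\<forall>\<alpha>\<in>S_sub S mul zero zero. \<exists>s\<in>S. mul zero s = \<alpha>)"

end

theory Submission
  imports Defs
begin

lemma sneg_props: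
  assumes "s_structure S add mul zero one" and s: "s \<in> S"
  shows "sneg S add zero s \<in> S \<and> add s (sneg S add zero s) = zero"
    and "\<And>t. t \<in> S \<Longrightarrow> add s t = zero \<Longrightarrow> sneg S add zero s = t"
proof -
  have cl: "\<forall>s\<in>S. \<forall>t\<in>S. add s t \<in> S" and as: "\<forall>s\<in>S. \<forall>t\<in>S. \<forall>r\<in>S. add (add s t) r = add s (add t r)"
    and cm: "\<forall>s\<in>S. \<forall>t\<in>S. add s t = add t s" and z: "zero \<in> S"
    and zi: "\<forall>s\<in>S. add zero s = s \<and> add s zero = s" and inv: "\<forall>s\<in>S. \<exists>t\<in>S. add s t = zero"
    using assms(1) unfolding s_structure_def by auto
  have uniq: "t = t'" if "t \<in> S" "t' \<in> S" "add s t = zero" "add s t' = zero" for t t'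
  proof -
    have "t = add t (add s t')" using that zi by simp
    also have "\<dots> = add (add t s) t'" using as that s by simp
    also have "\<dots> = t'" using that cm s zi by simp
    finally show ?thesis .
  qed
  obtain t where t: "t \<in> S" "add s t = zero" using inv s by blast
  have ex: "sneg S add zero s = t" unfolding sneg_def
    by (rule the_equality) (use t uniq in auto)
  show "sneg S add zero s \<in> S \<and> add s (sneg S add zero s) = zero" using ex t by simp
  show "\<And>t'. t' \<in> S \<Longrightarrow> add s t' = zero \<Longrightarrow> sneg S add zero s = t'"
    using ex t uniq by auto
qed

theorem theorem3p2p1:
  fixes S :: "'a set" and add mul :: "'a \<Rightarrow> 'a \<Rightarrow> 'a" and zero one :: 'a
  assumes "s_ring S add mul zero one"
  shows "Lambda S mul zero = S_sub S mul zero zero \<and> complete_regular S mul zero"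
proof -
  let ?N = "sneg S add zero"
  have ss: "s_structure S add mul zero one" and ess: "essential S add mul zero one"
    using assms unfolding s_ring_def essential_def by auto
  have cl: "\<And>s t. s\<in>S \<Longrightarrow> t\<in>S \<Longrightarrow> add s t \<in> S" and as: "\<And>s t r. s\<in>S \<Longrightarrow> t\<in>S \<Longrightarrow> r\<in>S \<Longrightarrow> add (add s t) r = add s (add t r)"
    and cm: "\<And>s t. s\<in>S \<Longrightarrow> t\<in>S \<Longrightarrow> add s t = add t s" and z: "zero \<in> S"
    and zl: "\<And>s. s\<in>S \<Longrightarrow> add zero s = s" and zr: "\<And>s. s\<in>S \<Longrightarrow> add s zero = s"
    and mcl: "\<And>s t. s\<in>S \<Longrightarrow> t\<in>S \<Longrightarrow> mul s t \<in> S" and o: "one \<in> S"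
    using ss unfolding s_structure_def by auto
  have ncl: "\<And>s. s \<in> S \<Longrightarrow> ?N s \<in> S" and ninv: "\<And>s. s \<in> S \<Longrightarrow> add s (?N s) = zero"
    using sneg_props(1)[OF ss] by auto
  have nun: "\<And>s t. s \<in> S \<Longrightarrow> t \<in> S \<Longrightarrow> add s t = zero \<Longrightarrow> ?N s = t"
    using sneg_props(2)[OF ss] by blast
  have sub: "\<And>a b. ssub S add zero a b = add a (?N b)" unfolding ssub_def by simp
  have mc: "\<And>s t. s\<in>S \<Longrightarrow> t\<in>S \<Longrightarrow> mul s t = mul t s"
    using ess unfolding essential_def s_commutative_def by auto
  have wd: "\<And>s t r. s\<in>S \<Longrightarrow> t\<in>S \<Longrightarrow> r\<in>S \<Longrightarrow> add (mul s (add t r)) (mul s zero) = add (mul s t) (mul s r)"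
    using ess unfolding essential_def wheel_distributive_def by auto
  have sa: "\<And>m n s. m \<in> S_sub S mul zero zero \<Longrightarrow> n \<in> S_sub S mul zero zero \<Longrightarrow> s \<in> S \<Longrightarrow>
        mul m (mul n s) = ssub S add zero (mul (mul m n) s)
          (mul (mul (ssub S add zero m one) (ssub S add zero n one)) (mul zero s))"
    using ess unfolding essential_def s_associative_def by blast
  have z0: "zero \<in> S_sub S mul zero zero" and o0: "one \<in> S_sub S mul zero zero"
    and S0: "S_sub S mul zero zero = {mul one x | x. x \<in> S_sub S mul zero zero}"
    using ess unfolding essential_def by auto
  have S0i: "\<And>x. x \<in> S_sub S mul zero zero \<longleftrightarrow> x \<in> S \<and> mul zero x = zero"
    unfolding S_sub_def using mc z by auto
  obtain e where eL: "e \<in> Lambda S mul zero" and eu: "\<And>s. s\<in>S \<Longrightarrow> mul e s = s \<and> mul s e = s"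
    using assms unfolding s_ring_def is_unity_def by blast
  have eS: "e \<in> S" using eL unfolding Lambda_def by auto
  obtain u where uS: "u \<in> S" and u: "mul zero u = e"
    using eL unfolding Lambda_def S_sub_def by auto
  have zz: "mul zero zero = zero" using z0 S0i by simp
  have zo: "mul zero one = zero" using o0 S0i by simp
  have ze: "mul zero e = zero" using eu[OF z] mc[OF z eS] by simp
  have zadd: "\<And>t r. t\<in>S \<Longrightarrow> r\<in>S \<Longrightarrow> mul zero (add t r) = add (mul zero t) (mul zero r)"
    using wd[OF z] zz zr mcl cl z by metis
  have n1: "?N one \<in> S" using ncl o by simp
  have sub01: "ssub S add zero zero one = ?N one" using sub zl n1 by simp
  have zn1: "mul zero (?N one) = zero"
  proof -
    have "mul zero (add one (?N one)) = add (mul zero one) (mul zero (?N one))" using zadd o n1 by simp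
    then show ?thesis using ninv[OF o] zz zo zl mcl z n1 by simp
  qed
  have n10: "?N one \<in> S_sub S mul zero zero" using S0i n1 zn1 by simp
  let ?c = "mul (?N one) (?N one)"
  have cS: "?c \<in> S" using mcl n1 by simp
  have ce: "?c = e"
  proof -
    have "mul zero (mul zero u) = ssub S add zero (mul (mul zero zero) u) (mul (mul (ssub S add zero zero one) (ssub S add zero zero one)) (mul zero u))"
      using sa z0 uS by blast
    hence "zero = add e (?N ?c)" using u ze zz sub01 sub eu[OF cS] by simp
    hence "add e (?N ?c) = zero" by simp
    hence "?N e = ?N ?c" using nun eS ncl cS by blast
    hence "?N (?N e) = ?N (?N ?c)" by simp
    moreover have "\<And>x. x \<in> S \<Longrightarrow> ?N (?N x) = x"
      using nun ncl ninv cm by metis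
    ultimately show ?thesis using eS cS by simp
  qed
  have zzs: "\<And>s. s \<in> S \<Longrightarrow> mul zero (mul zero s) = zero"
  proof -
    fix s assume s: "s \<in> S"
    have "mul zero (mul zero s) = ssub S add zero (mul (mul zero zero) s) (mul (mul (ssub S add zero zero one) (ssub S add zero zero one)) (mul zero s))"
      using sa z0 s by blast
    also have "\<dots> = add (mul zero s) (?N (mul zero s))" using zz sub01 sub ce eu mcl z s by simp
    also have "\<dots> = zero" using ninv mcl z s by simp
    finally show "mul zero (mul zero s) = zero" .
  qed
  have surj: "\<exists>s\<in>S. mul zero s = \<alpha>" if a: "\<alpha> \<in> S_sub S mul zero zero" for \<alpha>
  proof -
    obtain x where x: "x \<in> S_sub S mul zero zero" and ax: "\<alpha> = mul one x" using a S0 by blast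
    have xS: "x \<in> S" and zx: "mul zero x = zero" using x S0i by auto
    have aS: "\<alpha> \<in> S" using ax mcl o xS by simp
    have "mul zero (mul x u) = ssub S add zero (mul (mul zero x) u) (mul (mul (ssub S add zero zero one) (ssub S add zero x one)) (mul zero u))"
      using sa z0 x uS by blast
    also have "\<dots> = add e (?N (mul (?N one) (add x (?N one))))"
      using zx u sub sub01 eu mcl n1 cl xS by simp
    finally have eq1: "mul zero (mul x u) = add e (?N (mul (?N one) (add x (?N one))))" .
    have "add (mul (?N one) (add x (?N one))) (mul (?N one) zero) = add (mul (?N one) x) ?c"
      using wd n1 xS by simp
    moreover have "mul (?N one) zero = zero" using mc n1 z zn1 by simp
    ultimately have eq2: "mul (?N one) (add x (?N one)) = add (mul (?N one) x) e"
      using zr mcl cl n1 xS ce by metis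
    have "add (mul x (add one (?N one))) (mul x zero) = add (mul x one) (mul x (?N one))"
      using wd xS o n1 by simp
    moreover have "mul x zero = zero" using mc xS z zx by simp
    ultimately have "add (mul x one) (mul x (?N one)) = zero" using ninv o zr z by simp
    hence eq3: "mul (?N one) x = ?N \<alpha>" using nun ax mc xS o n1 mcl by metis
    have naS: "?N \<alpha> \<in> S" using ncl aS by simp
    have "?N (add (?N \<alpha>) e) = add \<alpha> (?N e)"
    proof (rule nun)
      show "add (?N \<alpha>) e \<in> S" using cl naS eS by simp
      show "add \<alpha> (?N e) \<in> S" using cl aS ncl eS by simp
      have "add (add (?N \<alpha>) e) (add \<alpha> (?N e)) = add (add \<alpha> (?N \<alpha>)) (add e (?N e))"
        using as cm naS eS aS ncl cl by metis
      thus "add (add (?N \<alpha>) e) (add \<alpha> (?N e)) = zero" using ninv aS eS zl z by simp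
    qed
    hence "mul zero (mul x u) = add e (add \<alpha> (?N e))" using eq1 eq2 eq3 by simp
    also have "\<dots> = \<alpha>" using as cm ninv zr aS eS ncl cl by metis
    finally show ?thesis using mcl xS uS by blast
  qed
  have L: "Lambda S mul zero = S_sub S mul zero zero"
  proof
    show "Lambda S mul zero \<subseteq> S_sub S mul zero zero"
    proof
      fix a assume "a \<in> Lambda S mul zero"
      then obtain s where s: "s \<in> S" "mul zero s = a" and aS: "a \<in> S"
        unfolding Lambda_def S_sub_def by auto
      thus "a \<in> S_sub S mul zero zero" using S0i zzs by auto
    qed
    show "S_sub S mul zero zero \<subseteq> Lambda S mul zero"
    proof
      fix a assume a: "a \<in> S_sub S mul zero zero"
      then obtain s where "s \<in> S" "mul zero s = a" using surj by blast
      moreover have "a \<in> S" using a S0i by auto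
      ultimately show "a \<in> Lambda S mul zero" unfolding Lambda_def S_sub_def using mc z by auto
    qed
  qed
  have "complete_regular S mul zero"
    unfolding complete_regular_def regular_def s_commutative_def
    using mc surj zzs S0i mcl z by auto
  with L show ?thesis by simp
qed

end
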